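(* Let $A,B,C\in\mathfrak{sl}_4(\mathbb R)$ be pairwise commuting symmetric matrices. Then the $G_2$-structure $(G_{A,B,C},\varphi)$ is equivalent to $(G_{A_1,B_1,C_1},\varphi)$ for some diagonal matrices $A_1,B_1,C_1\in\mathfrak{sl}_4(\mathbb R)$.
   Context: For pairwise commuting $A,B,C\in\mathfrak{sl}_4(\mathbb R)$, $\mathfrak g_{A,B,C}$ is the 7-dimensional Lie algebra with basis $\{e_1,\dots,e_7\}$ in which $\mathfrak a=\langle e_7,e_1,e_2\rangle$ is an abelian subalgebra, $\mathfrak n=\langle e_3,e_4,e_5,e_6\rangle$ is an abelian ideal, and in the basis $\{e_3,\dots,e_6\}$ one has $\mathrm{ad}\,e_7|_{\mathfrak n}=A$, $\mathrm{ad}\,e_1|_{\mathfrak n}=B$, $\mathrm{ad}\,e_2|_{\mathfrak n}=C$; $G_{A,B,C}$ is the corresponding simply connected Lie group, endowed with the left-invariant $G_2$-structure given by the positive 3-form $\varphi=e^{127}+e^{347}+e^{567}+e^{135}-e^{146}-e^{236}-e^{245}$ ($\{e^i\}$ the dual basis). Two $G_2$-structures $(M,\varphi)$, $(M',\varphi')$ are equivalent if there is a diffeomorphism $f:M\to M'$ with $f^*\varphi'=\varphi$. *)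

theory Defs
  imports "HOL-Analysis.Analysis"
begin

fun partials :: "('a::euclidean_space \<Rightarrow> 'b::euclidean_space) \<Rightarrow> nat \<Rightarrow> ('a \<Rightarrow> 'b) set" where
  "partials f 0 = {f}"
| "partials f (Suc n) =
     {h. \<exists>g\<in>partials f n. \<exists>i\<in>Basis.
           \<forall>x. ((\<lambda>t. g (x + t *\<^sub>R i)) has_vector_derivative h x) (at 0)}"

definition smooth_map :: "('a::euclidean_space \<Rightarrow> 'b::euclidean_space) \<Rightarrow> bool" where
  "smooth_map f \<longleftrightarrow>
     (\<forall>n. \<forall>g\<in>partials f n. continuous_on UNIV g \<and>
        (\<forall>i\<in>Basis. \<exists>h. \<forall>x. ((\<lambda>t. g (x + t *\<^sub>R i)) has_vector_derivative h x) (at 0)))"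

definition diffeomorphism :: "('a::euclidean_space \<Rightarrow> 'a) \<Rightarrow> bool" where
  "diffeomorphism f \<longleftrightarrow> bij f \<and> smooth_map f \<and> smooth_map (inv f)"

text \<open>Points of G are pairs (s,v) with s in R^3 and v in R^4.  The coordinates of s are
  (x7, x1, x2) (coordinates w.r.t. e7, e1, e2 spanning the abelian subalgebra a),
  and the coordinates of v are (x3, x4, x5, x6) (w.r.t. e3..e6 spanning n).\<close>
type_synonym pt = "(real^3) \<times> (real^4)"

fun matpow :: "real^4^4 \<Rightarrow> nat \<Rightarrow> real^4^4" where
  "matpow M 0 = mat 1"
| "matpow M (Suc k) = M ** matpow M k"

definition mexp :: "real^4^4 \<Rightarrow> real^4^4" where
  "mexp M = (\<Sum>k. (1 / fact k) *\<^sub>R matpow M k)"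

definition Mof :: "real^4^4 \<Rightarrow> real^4^4 \<Rightarrow> real^4^4 \<Rightarrow> real^3 \<Rightarrow> real^4^4" where
  "Mof A B C s = s$0 *\<^sub>R A + s$1 *\<^sub>R B + s$2 *\<^sub>R C"

text \<open>Simply connected group R^3 \<ltimes> R^4 integrating a \<ltimes> n, with a acting by
  ad e7 = A, ad e1 = B, ad e2 = C.\<close>
definition gmult :: "real^4^4 \<Rightarrow> real^4^4 \<Rightarrow> real^4^4 \<Rightarrow> pt \<Rightarrow> pt \<Rightarrow> pt" where
  "gmult A B C g h = (fst g + fst h, snd g + mexp (Mof A B C (fst g)) *v snd h)"

definition ginv :: "real^4^4 \<Rightarrow> real^4^4 \<Rightarrow> real^4^4 \<Rightarrow> pt \<Rightarrow> pt" where
  "ginv A B C g = (- fst g, - (mexp (Mof A B C (- fst g)) *v snd g))"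

fun ecoord :: "nat \<Rightarrow> pt \<Rightarrow> real" where
  "ecoord k u =
     (if k = 7 then fst u $ 0 else if k = 1 then fst u $ 1 else if k = 2 then fst u $ 2
      else if k = 3 then snd u $ 0 else if k = 4 then snd u $ 1
      else if k = 5 then snd u $ 2 else if k = 6 then snd u $ 3 else 0)"

definition wedge3 :: "nat \<Rightarrow> nat \<Rightarrow> nat \<Rightarrow> pt \<Rightarrow> pt \<Rightarrow> pt \<Rightarrow> real" where
  "wedge3 i j k u v w =
      ecoord i u * (ecoord j v * ecoord k w - ecoord k v * ecoord j w)
    - ecoord i v * (ecoord j u * ecoord k w - ecoord k u * ecoord j w)
    + ecoord i w * (ecoord j u * ecoord k v - ecoord k u * ecoord j v)"

definition phi0 :: "pt \<Rightarrow> pt \<Rightarrow> pt \<Rightarrow> real" where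
  "phi0 u v w = wedge3 1 2 7 u v w + wedge3 3 4 7 u v w + wedge3 5 6 7 u v w
     + wedge3 1 3 5 u v w - wedge3 1 4 6 u v w - wedge3 2 3 6 u v w - wedge3 2 4 5 u v w"

definition phiG :: "real^4^4 \<Rightarrow> real^4^4 \<Rightarrow> real^4^4 \<Rightarrow> pt \<Rightarrow> pt \<Rightarrow> pt \<Rightarrow> pt \<Rightarrow> real" where
  "phiG A B C g u v w =
     (let D = frechet_derivative (gmult A B C (ginv A B C g)) (at g)
      in phi0 (D u) (D v) (D w))"

definition G2_equivalent ::
  "real^4^4 \<Rightarrow> real^4^4 \<Rightarrow> real^4^4 \<Rightarrow> real^4^4 \<Rightarrow> real^4^4 \<Rightarrow> real^4^4 \<Rightarrow> bool" where
  "G2_equivalent A B C A' B' C' \<longleftrightarrow>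
     (\<exists>f::pt \<Rightarrow> pt. diffeomorphism f \<and>
        (\<forall>x u v w. let D = frechet_derivative f (at x) in
            phiG A' B' C' (f x) (D u) (D v) (D w) = phiG A B C x u v w))"

definition sl4 :: "real^4^4 \<Rightarrow> bool" where
  "sl4 M \<longleftrightarrow> trace M = 0"

definition symmetric_mat :: "real^4^4 \<Rightarrow> bool" where
  "symmetric_mat M \<longleftrightarrow> transpose M = M"

definition diagonal_mat :: "real^4^4 \<Rightarrow> bool" where
  "diagonal_mat M \<longleftrightarrow> (\<forall>i j. i \<noteq> j \<longrightarrow> M $ i $ j = 0)"

definition commute :: "real^4^4 \<Rightarrow> real^4^4 \<Rightarrow> bool" where
  "commute M N \<longleftrightarrow> M ** N = N ** M"

end

theory Submission
  imports Defs
begin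


lemma partials_affine:
  fixes f :: "'a::euclidean_space \<Rightarrow> 'b::euclidean_space"
  assumes "linear f"
  shows "g \<in> partials f n \<Longrightarrow> \<exists>L c. linear L \<and> g = (\<lambda>x. L x + c)"
proof (induction n arbitrary: g)
  case 0
  then show ?case using assms by (auto intro!: exI[of _ f] exI[of _ 0])
next
  case (Suc n)
  then obtain g0 i where g0: "g0 \<in> partials f n" "i \<in> Basis"
    and d: "\<forall>x. ((\<lambda>t. g0 (x + t *\<^sub>R i)) has_vector_derivative g x) (at 0)" by auto
  from Suc.IH[OF g0(1)] obtain L c where L: "linear L" "g0 = (\<lambda>x. L x + c)" by blast
  have "g x = L i" for x
  proof -
    have e: "(\<lambda>t. g0 (x + t *\<^sub>R i)) = (\<lambda>t. (L x + c) + t *\<^sub>R L i)"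
      using L by (auto simp: linear_add linear_scale algebra_simps)
    have "((\<lambda>t. (L x + c) + t *\<^sub>R L i) has_vector_derivative L i) (at 0)"
      by (auto intro!: derivative_eq_intros)
    then show ?thesis using d e vector_derivative_unique_at by metis
  qed
  then have "g = (\<lambda>x. (\<lambda>_. 0) x + L i)" by auto
  then show ?case by (metis linear_zero)
qed

lemma smooth_linear:
  fixes f :: "'a::euclidean_space \<Rightarrow> 'b::euclidean_space"
  assumes "linear f"
  shows "smooth_map f"
  unfolding smooth_map_def
proof (intro allI ballI conjI)
  fix n g assume g: "g \<in> partials f n"
  from partials_affine[OF assms g] obtain L c where L: "linear L" "g = (\<lambda>x. L x + c)" by blast
  have "continuous_on UNIV L" using L(1) by (simp add: linear_continuous_on linear_conv_bounded_linear)
  then show "continuous_on UNIV g" unfolding L(2)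
    by (intro continuous_on_add continuous_on_const)
  fix i :: 'a assume "i \<in> Basis"
  have "((\<lambda>t. g (x + t *\<^sub>R i)) has_vector_derivative L i) (at 0)" for x
  proof -
    have e: "(\<lambda>t. g (x + t *\<^sub>R i)) = (\<lambda>t. (L x + c) + t *\<^sub>R L i)"
      using L by (auto simp: linear_add linear_scale algebra_simps)
    show ?thesis unfolding e by (auto intro!: derivative_eq_intros)
  qed
  then show "\<exists>h. \<forall>x. ((\<lambda>t. g (x + t *\<^sub>R i)) has_vector_derivative h x) (at 0)" by (intro exI[of _ "\<lambda>_. L i"]) blast
qed

definition fmap :: "real^3^3 \<Rightarrow> real^4^4 \<Rightarrow> pt \<Rightarrow> pt" where
  "fmap R P u = (R *v fst u, P *v snd u)"

lemma bl_fmap: "bounded_linear (fmap R P)"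
  unfolding fmap_def
  by (intro bounded_linear_Pair bounded_linear_compose[OF matrix_vector_mul_bounded_linear]
      bounded_linear_fst bounded_linear_snd)

lemma fmap_comp:
  assumes "R' ** R = mat 1" "P' ** P = mat 1"
  shows "fmap R' P' (fmap R P u) = u"
  using assms by (simp add: fmap_def matrix_vector_mul_assoc)

lemma diffeo_fmap:
  assumes "transpose R ** R = mat 1" "R ** transpose R = mat 1"
    "transpose P ** P = mat 1" "P ** transpose P = mat 1"
  shows "diffeomorphism (fmap R P)"
proof -
  let ?g = "fmap (transpose R) (transpose P)"
  have c1: "fmap R P \<circ> ?g = id" using fmap_comp[of R "transpose R" P "transpose P"] assms
    by (auto simp: fun_eq_iff)
  have c2: "?g \<circ> fmap R P = id" using fmap_comp[of "transpose R" R "transpose P" P] assms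
    by (auto simp: fun_eq_iff)
  have "bij (fmap R P)" by (rule o_bij[OF c2 c1])
  moreover have "inv (fmap R P) = ?g" using c1 c2 by (rule inv_unique_comp)
  moreover have "smooth_map (fmap R P)" by (rule smooth_linear[OF bounded_linear.linear[OF bl_fmap]])
  moreover have "smooth_map ?g" by (rule smooth_linear[OF bounded_linear.linear[OF bl_fmap]])
  ultimately show ?thesis unfolding diffeomorphism_def by simp
qed

lemma fderiv_fmap: "frechet_derivative (fmap R P) (at x) = fmap R P"
  by (rule frechet_derivative_at[symmetric], rule bounded_linear_imp_has_derivative, rule bl_fmap)

lemma fderiv_L:
  "frechet_derivative (gmult A B C (ginv A B C g)) (at g)
   = (\<lambda>h. (fst h, mexp (Mof A B C (- fst g)) *v snd h))"
proof -
  let ?E = "mexp (Mof A B C (- fst g))"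
  let ?L = "\<lambda>h::pt. (fst h, ?E *v snd h)"
  have bl: "bounded_linear ?L"
    by (intro bounded_linear_Pair bounded_linear_compose[OF matrix_vector_mul_bounded_linear]
      bounded_linear_fst bounded_linear_snd)
  have e: "gmult A B C (ginv A B C g) = (\<lambda>h. ?L h + ginv A B C g)"
    by (auto simp: gmult_def ginv_def fun_eq_iff)
  have "(gmult A B C (ginv A B C g) has_derivative ?L) (at g)"
    unfolding e by (intro has_derivative_add_const bounded_linear_imp_has_derivative bl)
  then show ?thesis by (rule frechet_derivative_at[symmetric])
qed

lemma mmult_scaleR_right: "(M::real^'n^'m) ** (c *\<^sub>R X) = c *\<^sub>R (M ** (X::real^'k^'n))"
  by (simp add: vec_eq_iff matrix_matrix_mult_def sum_distrib_left mult_ac)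

lemma mmult_scaleR_left: "(c *\<^sub>R (M::real^'n^'m)) ** X = c *\<^sub>R (M ** (X::real^'k^'n))"
  by (simp add: vec_eq_iff matrix_matrix_mult_def sum_distrib_left mult_ac)

lemma matrix_add_rdistrib': "((B + C) ** (A::real^'k^'n)) = (B ** A) + (C ** A)"
  by (vector matrix_matrix_mult_def sum.distrib[symmetric] field_simps)

lemma linear_lmult: "linear (\<lambda>X::real^'k^'n. (M::real^'n^'m) ** X)"
  by (simp add: linear_iff matrix_add_ldistrib mmult_scaleR_right)

lemma linear_conj: "linear (\<lambda>X::real^'n^'n. (P::real^'n^'m) ** X ** Q)"
  by (simp add: linear_iff matrix_add_ldistrib matrix_add_rdistrib' mmult_scaleR_right mmult_scaleR_left)

lemma summable_mexp: "summable (\<lambda>k. (1 / fact k) *\<^sub>R matpow (M::real^4^4) k)"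
proof -
  have "bounded_linear (\<lambda>X::real^4^4. M ** X)"
    using linear_lmult linear_conv_bounded_linear by blast
  then obtain K where K: "K > 0" "\<And>X::real^4^4. norm (M ** X) \<le> norm X * K"
    using bounded_linear.pos_bounded by blast
  have nb: "norm (matpow M k) \<le> K ^ k * norm (mat 1 :: real^4^4)" for k
  proof (induction k)
    case 0 then show ?case by simp
  next
    case (Suc k)
    have "norm (matpow M (Suc k)) \<le> norm (matpow M k) * K" using K(2) by simp
    also have "\<dots> \<le> K ^ k * norm (mat 1 :: real^4^4) * K"
      using Suc K(1) by (simp add: mult_right_mono)
    finally show ?case by (simp add: mult_ac)
  qed
  have s: "summable (\<lambda>k. inverse (fact k) * K ^ k * norm (mat 1 :: real^4^4))"
    by (intro summable_mult2 summable_exp)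
  show ?thesis
  proof (rule summable_comparison_test[OF _ s])
    show "\<exists>N. \<forall>n\<ge>N. norm ((1 / fact n) *\<^sub>R matpow M n) \<le> inverse (fact n) * K ^ n * norm (mat 1 :: real^4^4)"
      using nb by (auto intro!: exI[of _ 0] simp: divide_inverse mult.assoc intro!: mult_left_mono)
  qed
qed

lemma matpow_conj:
  assumes "transpose P ** P = mat 1" "P ** transpose P = mat 1"
  shows "matpow (P ** X ** transpose P) k = P ** matpow X k ** transpose P"
proof (induction k)
  case 0 then show ?case using assms by (simp add: matrix_mul_rid)
next
  case (Suc k)
  have "P ** X ** transpose P ** (P ** matpow X k ** transpose P)
      = P ** X ** (transpose P ** P) ** matpow X k ** transpose P"
    by (simp add: matrix_mul_assoc)
  then show ?case using Suc assms by (simp add: matrix_mul_assoc matrix_mul_rid)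
qed

lemma mexp_conj:
  assumes "transpose P ** P = mat 1" "P ** transpose P = mat 1"
  shows "mexp (P ** X ** transpose P) = P ** mexp X ** transpose P"
proof -
  have bl: "bounded_linear (\<lambda>Y::real^4^4. P ** Y ** transpose P)"
    using linear_conj linear_conv_bounded_linear by blast
  have "P ** mexp X ** transpose P = (\<Sum>k. P ** ((1 / fact k) *\<^sub>R matpow X k) ** transpose P)"
    unfolding mexp_def by (rule bounded_linear.suminf[OF bl summable_mexp])
  also have "\<dots> = (\<Sum>k. (1 / fact k) *\<^sub>R matpow (P ** X ** transpose P) k)"
    using matpow_conj[OF assms] by (simp add: mmult_scaleR_right mmult_scaleR_left)
  finally show ?thesis unfolding mexp_def by simp
qed

lemma equiv_main:
  assumes R: "transpose R ** R = mat 1" "R ** transpose R = mat 1"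
   and P: "transpose P ** P = mat 1" "P ** transpose P = mat 1"
   and M: "\<And>s. Mof A1 B1 C1 (R *v s) = P ** Mof A B C s ** transpose P"
   and inv: "\<And>u v w. phi0 (fmap R P u) (fmap R P v) (fmap R P w) = phi0 u v w"
  shows "G2_equivalent A B C A1 B1 C1"
  unfolding G2_equivalent_def
proof (intro exI[of _ "fmap R P"] conjI allI)
  show "diffeomorphism (fmap R P)" by (rule diffeo_fmap[OF R P])
  fix x u v w :: pt
  let ?E = "mexp (Mof A B C (- fst x))"
  let ?T = "\<lambda>h::pt. (fst h, ?E *v snd h)"
  have neg: "- (R *v fst x) = R *v (- fst x)"
    by (simp add: matrix_vector_mult_def vec_eq_iff sum_negf)
  have key: "(fst (fmap R P h), mexp (Mof A1 B1 C1 (- fst (fmap R P x))) *v snd (fmap R P h))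
           = fmap R P (?T h)" for h
  proof -
    have "mexp (Mof A1 B1 C1 (- fst (fmap R P x))) = P ** ?E ** transpose P"
      unfolding fmap_def fst_conv neg M by (rule mexp_conj[OF P])
    then have "mexp (Mof A1 B1 C1 (- fst (fmap R P x))) *v snd (fmap R P h) = P *v (?E *v snd h)"
      using P(1) by (simp add: fmap_def matrix_vector_mul_assoc flip: matrix_mul_assoc)
    then show ?thesis by (simp add: fmap_def)
  qed
  show "let D = frechet_derivative (fmap R P) (at x)
        in phiG A1 B1 C1 (fmap R P x) (D u) (D v) (D w) = phiG A B C x u v w"
    unfolding fderiv_fmap Let_def phiG_def fderiv_L key inv by simp
qed



lemma quad_zero:
  fixes c d :: real
  assumes "\<And>t. 2*t*c + t^2*d \<le> 0"
  shows "c = 0"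
proof -
  define k where "k = \<bar>d\<bar> + 1"
  have k: "k > 0" "\<bar>d\<bar> < k" unfolding k_def by auto
  define t where "t = c / (2*k)"
  have "2*t*c + t^2*d = c^2 / k + c^2 * d / (4*k^2)"
    unfolding t_def using k by (simp add: field_simps power2_eq_square)
  also have "\<dots> = c^2 / (4*k^2) * (4*k + d)"
    using k by (simp add: field_simps power2_eq_square)
  finally have e: "2*t*c + t^2*d = c^2 / (4*k^2) * (4*k + d)" .
  have B: "4*k + d > 0" using k by linarith
  have le: "c^2 / (4*k^2) * (4*k + d) \<le> 0" using assms[of t] e by simp
  have "\<not> c^2 / (4*k^2) > 0"
  proof
    assume "c^2 / (4*k^2) > 0"
    then have "c^2 / (4*k^2) * (4*k + d) > 0" using B by (rule mult_pos_pos)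
    then show False using le by simp
  qed
  moreover have "4*k^2 > 0" using k by simp
  ultimately have "c^2 \<le> 0" by (simp add: divide_le_0_iff not_less)
  then show ?thesis by simp
qed

definition selfadj :: "('a::real_inner \<Rightarrow> 'a) \<Rightarrow> bool" where
  "selfadj g \<longleftrightarrow> linear g \<and> (\<forall>x y. inner (g x) y = inner x (g y))"

lemma selfadj_eig:
  fixes g :: "'a::euclidean_space \<Rightarrow> 'a"
  assumes g: "selfadj g" and S: "subspace S" and v: "v \<in> S" "v \<noteq> 0" and inv: "\<And>x. x \<in> S \<Longrightarrow> g x \<in> S"
  shows "\<exists>x\<in>S. x \<noteq> 0 \<and> (\<exists>\<mu>. g x = \<mu> *\<^sub>R x)"
proof -
  have lin: "linear g" and sa: "\<And>x y. inner (g x) y = inner x (g y)" using g by (auto simp: selfadj_def)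
  let ?K = "S \<inter> sphere 0 1"
  let ?q = "\<lambda>x. inner x (g x)"
  have cK: "compact ?K" using closed_subspace[OF S] by (intro closed_Int_compact compact_sphere)
  have "v /\<^sub>R norm v \<in> ?K" using v S by (auto simp: subspace_scale)
  then have neK: "?K \<noteq> {}" by blast
  have cg: "continuous_on UNIV g" using lin by (simp add: linear_continuous_on linear_conv_bounded_linear)
  have "continuous_on ?K ?q"
    by (intro continuous_intros continuous_on_subset[OF cg]) auto
  from continuous_attains_sup[OF cK neK this] obtain x0 where
    x0: "x0 \<in> ?K" and mx: "\<And>y. y \<in> ?K \<Longrightarrow> ?q y \<le> ?q x0" by blast
  define l where "l = ?q x0"
  have x0S: "x0 \<in> S" and nx0: "norm x0 = 1" using x0 by auto
  have gsc: "g (c *\<^sub>R x) = c *\<^sub>R g x" for c x using lin by (simp add: linear_scale)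
  have gadd: "g (x + y) = g x + g y" for x y using lin by (simp add: linear_add)
  have c1: "?q z \<le> l * (norm z)^2" if "z \<in> S" for z
  proof (cases "z = 0")
    case True then show ?thesis using lin by (simp add: linear_0)
  next
    case False
    have "z /\<^sub>R norm z \<in> ?K" using that False S by (auto simp: subspace_scale)
    then have "?q (z /\<^sub>R norm z) \<le> l" unfolding l_def by (rule mx)
    moreover have "?q (z /\<^sub>R norm z) = ?q z / (norm z)^2"
      by (simp add: gsc power2_eq_square divide_inverse inverse_mult_distrib mult_ac)
    ultimately show ?thesis using False by (simp add: divide_le_eq mult.commute)
  qed
  have c2: "inner y (g x0) = 0" if y: "y \<in> S" "inner y x0 = 0" for y
  proof (rule quad_zero[where d = "?q y - l * (norm y)^2"])
    fix t :: real
    have zS: "x0 + t *\<^sub>R y \<in> S" using S x0S y by (simp add: subspace_add subspace_scale)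
    have qe: "?q (x0 + t *\<^sub>R y) = l + 2*t*inner y (g x0) + t^2 * ?q y"
      unfolding l_def using sa[of x0 y]
      by (simp add: gadd gsc inner_add_left inner_add_right power2_eq_square algebra_simps inner_commute)
    have i0: "inner x0 x0 = 1" using nx0 power2_norm_eq_inner[of x0] by simp
    have i1: "inner x0 y = 0" using y(2) by (simp add: inner_commute)
    have "(norm (x0 + t *\<^sub>R y))^2 = inner (x0 + t *\<^sub>R y) (x0 + t *\<^sub>R y)" by (rule power2_norm_eq_inner)
    also have "\<dots> = inner x0 x0 + 2*t*inner x0 y + t^2 * inner y y"
      by (simp add: inner_add_left inner_add_right inner_commute power2_eq_square algebra_simps)
    also have "\<dots> = 1 + t^2 * (norm y)^2" using i0 i1 by (simp add: power2_norm_eq_inner)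
    finally have "(norm (x0 + t *\<^sub>R y))^2 = 1 + t^2 * (norm y)^2" .
    then show "2*t*inner y (g x0) + t^2 * (?q y - l * (norm y)^2) \<le> 0"
      using c1[OF zS] qe by (simp add: algebra_simps)
  qed
  define z where "z = g x0 - l *\<^sub>R x0"
  have zS: "z \<in> S" unfolding z_def using S x0S inv[OF x0S] by (simp add: subspace_diff subspace_scale)
  have zx: "inner z x0 = 0"
  proof -
    have i0: "inner x0 x0 = 1" using nx0 power2_norm_eq_inner[of x0] by simp
    have "inner z x0 = inner (g x0) x0 - l * inner x0 x0" unfolding z_def by (simp add: inner_diff_left)
    then show ?thesis unfolding l_def using i0 by (simp add: inner_commute)
  qed
  have "inner z (g x0) = 0" by (rule c2[OF zS zx])
  then have "inner z z = 0" using zx unfolding z_def[symmetric]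
    by (metis (no_types, lifting) diff_zero inner_diff_right inner_scaleR_right mult_zero_right z_def)
  then have "g x0 = l *\<^sub>R x0" unfolding z_def by simp
  then show ?thesis using x0S nx0 by (intro bexI[of _ x0]) auto
qed

lemma common_eig:
  fixes F :: "('a::euclidean_space \<Rightarrow> 'a) set"
  assumes "finite F"
  shows "\<lbrakk>\<forall>f\<in>F. selfadj f; \<forall>f\<in>F. \<forall>g\<in>F. f \<circ> g = g \<circ> f; subspace S; v \<in> S; v \<noteq> 0;
          \<forall>f\<in>F. \<forall>x\<in>S. f x \<in> S\<rbrakk> \<Longrightarrow> \<exists>x\<in>S. x \<noteq> 0 \<and> (\<forall>f\<in>F. \<exists>\<mu>. f x = \<mu> *\<^sub>R x)"
  using assms
proof (induction F arbitrary: S v rule: finite_induct)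
  case empty
  then show ?case by auto
next
  case (insert g F)
  have sg: "selfadj g" using insert.prems by auto
  obtain x1 \<mu>1 where x1: "x1 \<in> S" "x1 \<noteq> 0" "g x1 = \<mu>1 *\<^sub>R x1"
    using selfadj_eig[OF sg insert.prems(3,4,5)] insert.prems(6) by auto
  define S1 where "S1 = {x\<in>S. g x = \<mu>1 *\<^sub>R x}"
  have lg: "linear g" using sg by (simp add: selfadj_def)
  have sub1: "subspace S1" unfolding S1_def subspace_def
    using insert.prems(3) lg by (auto simp: subspace_def linear_0 linear_add linear_scale algebra_simps)
  have inv1: "\<forall>f\<in>F. \<forall>x\<in>S1. f x \<in> S1"
  proof (intro ballI)
    fix f x assume f: "f \<in> F" and x: "x \<in> S1"
    have lf: "linear f" using insert.prems(1) f by (auto simp: selfadj_def)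
    have fS: "f x \<in> S" using insert.prems(6) f x by (auto simp: S1_def)
    have "g (f x) = f (g x)" using insert.prems(2) f by (auto simp: fun_eq_iff)
    also have "\<dots> = \<mu>1 *\<^sub>R f x" using x lf by (simp add: S1_def linear_scale)
    finally show "f x \<in> S1" using fS by (simp add: S1_def)
  qed
  have "x1 \<in> S1" using x1 by (simp add: S1_def)
  from insert.IH[OF _ _ sub1 this x1(2) inv1] insert.prems(1,2)
  obtain x where x: "x \<in> S1" "x \<noteq> 0" "\<forall>f\<in>F. \<exists>\<mu>. f x = \<mu> *\<^sub>R x" by auto
  then show ?case by (intro bexI[of _ x]) (auto simp: S1_def)
qed

lemma eigbasis:
  fixes F :: "('a::euclidean_space \<Rightarrow> 'a) set"
  assumes fin: "finite F" and sa: "\<forall>f\<in>F. selfadj f" and cm: "\<forall>f\<in>F. \<forall>g\<in>F. f \<circ> g = g \<circ> f"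
  shows "subspace S \<Longrightarrow> (\<forall>f\<in>F. \<forall>x\<in>S. f x \<in> S) \<Longrightarrow>
    \<exists>B. finite B \<and> B \<subseteq> S \<and> S \<subseteq> span B \<and> pairwise orthogonal B \<and>
        (\<forall>x\<in>B. norm x = 1 \<and> (\<forall>f\<in>F. \<exists>\<mu>. f x = \<mu> *\<^sub>R x))"
proof (induction "dim S" arbitrary: S rule: less_induct)
  case less
  show ?case
  proof (cases "S \<subseteq> {0}")
    case True
    then show ?thesis by (intro exI[of _ "{}"]) auto
  next
    case False
    then obtain v where v: "v \<in> S" "v \<noteq> 0" by auto
    obtain x where x: "x \<in> S" "x \<noteq> 0" "\<forall>f\<in>F. \<exists>\<mu>. f x = \<mu> *\<^sub>R x"
      using common_eig[OF fin sa cm less.prems(1) v less.prems(2)] by blast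
    define u where "u = x /\<^sub>R norm x"
    have uS: "u \<in> S" unfolding u_def using x less.prems(1) by (simp add: subspace_scale)
    have nu: "norm u = 1" unfolding u_def using x by simp
    have uu: "inner u u = 1" using nu power2_norm_eq_inner[of u] by simp
    have ue: "\<forall>f\<in>F. \<exists>\<mu>. f u = \<mu> *\<^sub>R u"
    proof
      fix f assume f: "f \<in> F"
      then obtain \<mu> where "f x = \<mu> *\<^sub>R x" using x by auto
      moreover have "linear f" using sa f by (simp add: selfadj_def)
      ultimately show "\<exists>\<mu>. f u = \<mu> *\<^sub>R u" unfolding u_def by (auto simp: linear_scale)
    qed
    define S' where "S' = {y\<in>S. inner u y = 0}"
    have sub': "subspace S'" using less.prems(1) unfolding S'_def subspace_def
      by (auto simp: inner_add_right)
    have inv': "\<forall>f\<in>F. \<forall>y\<in>S'. f y \<in> S'"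
    proof (intro ballI)
      fix f y assume f: "f \<in> F" and y: "y \<in> S'"
      obtain \<mu> where m: "f u = \<mu> *\<^sub>R u" using ue f by auto
      have "inner u (f y) = inner (f u) y" using sa f by (simp add: selfadj_def)
      also have "\<dots> = 0" using m y by (simp add: S'_def)
      finally show "f y \<in> S'" using less.prems(2) f y by (auto simp: S'_def)
    qed
    have "u \<notin> S'" using uu by (simp add: S'_def)
    then have "S' \<subset> S" using uS unfolding S'_def by blast
    have e1: "span S' = S'" using sub' by simp
    have e2: "span S = S" using less.prems(1) by simp
    have "span S' \<subset> span S" unfolding e1 e2 by fact
    then have "dim S' < dim S" by (rule dim_psubset)
    from less.hyps[OF this sub' inv'] obtain B' where B': "finite B'" "B' \<subseteq> S'" "S' \<subseteq> span B'"
      "pairwise orthogonal B'" "\<forall>x\<in>B'. norm x = 1 \<and> (\<forall>f\<in>F. \<exists>\<mu>. f x = \<mu> *\<^sub>R x)" by blast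
    show ?thesis
    proof (intro exI[of _ "insert u B'"] conjI)
      show "finite (insert u B')" using B' by simp
      show "insert u B' \<subseteq> S" using B' uS by (auto simp: S'_def)
      show "S \<subseteq> span (insert u B')"
      proof
        fix y assume y: "y \<in> S"
        have "y - inner u y *\<^sub>R u \<in> S'" using y uS less.prems(1) uu
          by (simp add: S'_def subspace_diff subspace_scale inner_diff_right)
        then have "y - inner u y *\<^sub>R u \<in> span (insert u B')" using B'(3) span_mono[of B' "insert u B'"] by auto
        moreover have "inner u y *\<^sub>R u \<in> span (insert u B')" by (simp add: span_base span_scale)
        ultimately have "(y - inner u y *\<^sub>R u) + inner u y *\<^sub>R u \<in> span (insert u B')" by (rule span_add)
        then show "y \<in> span (insert u B')" by simp
      qed
      show "pairwise orthogonal (insert u B')"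
        using B'(2,4) by (auto simp: pairwise_insert S'_def orthogonal_def inner_commute)
      show "\<forall>x\<in>insert u B'. norm x = 1 \<and> (\<forall>f\<in>F. \<exists>\<mu>. f x = \<mu> *\<^sub>R x)" using B'(5) nu ue by auto
    qed
  qed
qed



lemma four_eq_zero: "(4::4) = 0" by simp
lemma three_eq_zero: "(3::3) = 0" by simp

lemma sum4': "sum f (UNIV::4 set) = f 0 + f 1 + f 2 + f 3"
  using sum_4[of f] unfolding four_eq_zero by (simp add: ac_simps)
lemma sum3': "sum f (UNIV::3 set) = f 0 + f 1 + f 2"
  using sum_3[of f] unfolding three_eq_zero by (simp add: ac_simps)
lemma forall4': "(\<forall>i::4. P i) \<longleftrightarrow> P 0 \<and> P 1 \<and> P 2 \<and> P 3"
  using forall_4[of P] unfolding four_eq_zero by auto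
lemma forall3': "(\<forall>i::3. P i) \<longleftrightarrow> P 0 \<and> P 1 \<and> P 2"
  using forall_3[of P] unfolding three_eq_zero by auto

definition om1 :: "real^4 \<Rightarrow> real^4 \<Rightarrow> real" where
  "om1 x y = x$0*y$1 - x$1*y$0 + x$2*y$3 - x$3*y$2"
definition om2 :: "real^4 \<Rightarrow> real^4 \<Rightarrow> real" where
  "om2 x y = x$0*y$2 - x$2*y$0 - x$1*y$3 + x$3*y$1"
definition om3 :: "real^4 \<Rightarrow> real^4 \<Rightarrow> real" where
  "om3 x y = x$0*y$3 - x$3*y$0 + x$1*y$2 - x$2*y$1"

lemma phi0_om: "phi0 u v w = wedge3 1 2 7 u v w
  + (fst u$0 * om1 (snd v) (snd w) - fst v$0 * om1 (snd u) (snd w) + fst w$0 * om1 (snd u) (snd v))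
  + (fst u$1 * om2 (snd v) (snd w) - fst v$1 * om2 (snd u) (snd w) + fst w$1 * om2 (snd u) (snd v))
  - (fst u$2 * om3 (snd v) (snd w) - fst v$2 * om3 (snd u) (snd w) + fst w$2 * om3 (snd u) (snd v))"
  by (simp add: phi0_def wedge3_def om1_def om2_def om3_def algebra_simps)

definition v4 :: "real \<Rightarrow> real \<Rightarrow> real \<Rightarrow> real \<Rightarrow> real^4" where
  "v4 a b c d = (\<chi> i. if i = 0 then a else if i = 1 then b else if i = 2 then c else d)"

lemma v4_nth [simp]: "v4 a b c d $ 0 = a" "v4 a b c d $ 1 = b" "v4 a b c d $ 2 = c" "v4 a b c d $ 3 = d"
  by (simp_all add: v4_def)

definition P1 :: "real \<Rightarrow> real \<Rightarrow> real \<Rightarrow> real \<Rightarrow> real^4^4" where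
  "P1 a b c d = (\<chi> i. if i = 0 then v4 a b c d else if i = 1 then v4 (-b) a (-d) c
       else if i = 2 then v4 (-c) d a (-b) else v4 (-d) (-c) b a)"

lemma P1_mv: "P1 a b c d *v x = v4 (a*x$0 + b*x$1 + c*x$2 + d*x$3) (-b*x$0 + a*x$1 - d*x$2 + c*x$3)
   (-c*x$0 + d*x$1 + a*x$2 - b*x$3) (-d*x$0 - c*x$1 + b*x$2 + a*x$3)"
  by (simp add: vec_eq_iff forall4' matrix_vector_mult_def sum4' P1_def)

lemma om_P1:
  assumes "a^2 + b^2 + c^2 + d^2 = 1"
  shows "om1 (P1 a b c d *v x) (P1 a b c d *v y) = om1 x y"
    "om2 (P1 a b c d *v x) (P1 a b c d *v y) = om2 x y"
    "om3 (P1 a b c d *v x) (P1 a b c d *v y) = om3 x y"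
proof -
  have "om1 (P1 a b c d *v x) (P1 a b c d *v y) = (a^2 + b^2 + c^2 + d^2) * om1 x y"
    by (simp add: P1_mv om1_def power2_eq_square algebra_simps)
  then show "om1 (P1 a b c d *v x) (P1 a b c d *v y) = om1 x y" using assms by simp
  have "om2 (P1 a b c d *v x) (P1 a b c d *v y) = (a^2 + b^2 + c^2 + d^2) * om2 x y"
    by (simp add: P1_mv om2_def power2_eq_square algebra_simps)
  then show "om2 (P1 a b c d *v x) (P1 a b c d *v y) = om2 x y" using assms by simp
  have "om3 (P1 a b c d *v x) (P1 a b c d *v y) = (a^2 + b^2 + c^2 + d^2) * om3 x y"
    by (simp add: P1_mv om3_def power2_eq_square algebra_simps)
  then show "om3 (P1 a b c d *v x) (P1 a b c d *v y) = om3 x y" using assms by simp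
qed

lemma phi0_P1:
  assumes "a^2 + b^2 + c^2 + d^2 = 1"
  shows "phi0 (fmap (mat 1) (P1 a b c d) u) (fmap (mat 1) (P1 a b c d) v) (fmap (mat 1) (P1 a b c d) w)
       = phi0 u v w"
  unfolding phi0_om by (simp add: fmap_def om_P1[OF assms] wedge3_def)

definition cc :: "pt \<Rightarrow> real^3" where
  "cc u = (\<chi> i. if i = 2 then - (fst u $ i) else fst u $ i)"
definition bb :: "pt \<Rightarrow> real^3" where
  "bb u = (\<chi> i. if i = 0 then snd u $ 1 else if i = 1 then snd u $ 2 else snd u $ 3)"
definition D3 :: "real^3 \<Rightarrow> real^3 \<Rightarrow> real^3 \<Rightarrow> real" where
  "D3 x y z = det (\<chi> i. if i = 0 then x else if i = 1 then y else z :: real^3^3)"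
definition beta :: "pt \<Rightarrow> pt \<Rightarrow> real" where
  "beta x y = inner (cc x) (bb y) - inner (cc y) (bb x)"

lemma D3_expl: "D3 x y z = x$0*(y$1*z$2 - y$2*z$1) - x$1*(y$0*z$2 - y$2*z$0) + x$2*(y$0*z$1 - y$1*z$0)"
  unfolding D3_def det_3 three_eq_zero by (simp add: algebra_simps)

lemma phi0_cb: "phi0 u v w = - D3 (cc u) (cc v) (cc w)
   + (D3 (cc u) (bb v) (bb w) + D3 (cc v) (bb w) (bb u) + D3 (cc w) (bb u) (bb v))
   - (snd u$0 * beta v w - snd v$0 * beta u w + snd w$0 * beta u v)"
  by (simp add: phi0_def wedge3_def D3_expl beta_def cc_def bb_def inner_vec_def sum3' algebra_simps)

definition sg :: "3 \<Rightarrow> real" where "sg i = (if i = 2 then -1 else 1)"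
definition Rm :: "real^3^3 \<Rightarrow> real^3^3" where "Rm Q = (\<chi> i j. sg i * Q$i$j * sg j)"
definition dn :: "4 \<Rightarrow> 3" where "dn i = (if i = 1 then 0 else if i = 2 then 1 else 2)"
definition Pm :: "real^3^3 \<Rightarrow> real^4^4" where
  "Pm Q = (\<chi> i j. if i = 0 then (if j = 0 then 1 else 0) else if j = 0 then 0 else Q$(dn i)$(dn j))"

lemma cc_fmap: "cc (fmap (Rm Q) P u) = Q *v cc u"
  by (simp add: vec_eq_iff forall3' cc_def fmap_def matrix_vector_mult_def sum3' Rm_def sg_def)

lemma bb_fmap: "bb (fmap R (Pm Q) u) = Q *v bb u"
  by (simp add: vec_eq_iff forall3' bb_def fmap_def matrix_vector_mult_def sum3' sum4' Pm_def dn_def)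

lemma e3_fmap: "snd (fmap R (Pm Q) u) $ 0 = snd u $ 0"
  by (simp add: fmap_def matrix_vector_mult_def sum4' Pm_def dn_def)

lemma D3_mul: "D3 (Q *v x) (Q *v y) (Q *v z) = det Q * D3 x y z"
proof -
  have "(\<chi> i. if i = 0 then Q *v x else if i = 1 then Q *v y else Q *v z :: real^3^3)
      = (\<chi> i. if i = 0 then x else if i = 1 then y else z) ** transpose Q"
    by (simp add: vec_eq_iff forall3' matrix_matrix_mult_def matrix_vector_mult_def transpose_def mult.commute)
  then show ?thesis unfolding D3_def by (simp add: det_mul det_transpose mult.commute)
qed

lemma inner_Q:
  assumes "transpose Q ** Q = mat 1"
  shows "inner (Q *v x) (Q *v y) = inner x (y::real^'n)"
proof -
  have "inner (Q *v x) (Q *v y) = inner ((Q *v x) v* Q) y" by (simp add: dot_lmul_matrix)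
  also have "(Q *v x) v* Q = x"
    using assms by (metis transpose_matrix_vector matrix_vector_mul_assoc matrix_vector_mul_lid)
  finally show ?thesis .
qed

lemma phi0_H3:
  assumes "transpose Q ** Q = mat 1" "det Q = 1"
  shows "phi0 (fmap (Rm Q) (Pm Q) u) (fmap (Rm Q) (Pm Q) v) (fmap (Rm Q) (Pm Q) w) = phi0 u v w"
  unfolding phi0_cb by (simp add: cc_fmap bb_fmap e3_fmap D3_mul beta_def inner_Q[OF assms(1)] assms(2))

lemma Rm_mult: "Rm X ** Rm Y = Rm (X ** Y)"
  by (simp add: vec_eq_iff forall3' matrix_matrix_mult_def sum3' Rm_def sg_def algebra_simps)
lemma Rm_transpose: "transpose (Rm X) = Rm (transpose X)"
  by (simp add: vec_eq_iff forall3' transpose_def Rm_def sg_def)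
lemma Rm_one: "Rm (mat 1) = mat 1"
  by (simp add: vec_eq_iff forall3' mat_def Rm_def sg_def)
lemma Pm_mult: "Pm X ** Pm Y = Pm (X ** Y)"
  by (simp add: vec_eq_iff forall4' matrix_matrix_mult_def sum3' sum4' Pm_def dn_def)
lemma Pm_transpose: "transpose (Pm X) = Pm (transpose X)"
  by (simp add: vec_eq_iff forall4' transpose_def Pm_def dn_def)
lemma Pm_one: "Pm (mat 1) = mat 1"
  by (simp add: vec_eq_iff forall4' mat_def Pm_def dn_def)

lemma P1_orth_gen: "transpose (P1 a b c d) ** P1 a b c d = (a^2 + b^2 + c^2 + d^2) *\<^sub>R mat 1"
  by (simp add: vec_eq_iff forall4' matrix_matrix_mult_def sum4' P1_def transpose_def mat_def power2_eq_square algebra_simps)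

lemma fmap_compose: "fmap (R2 ** R1) (P2 ** Pa) u = fmap R2 P2 (fmap R1 Pa u)"
  by (simp add: fmap_def matrix_vector_mul_assoc)



lemma selfadj_sym: "transpose A = A \<Longrightarrow> selfadj ((*v) (A::real^4^4))"
  unfolding selfadj_def
proof (intro conjI allI)
  assume s: "transpose A = A"
  show "linear ((*v) A)" by (rule matrix_vector_mul_linear)
  fix x y :: "real^4"
  have "A *v x = x v* A" using transpose_matrix_vector[of A x] s by simp
  then show "inner (A *v x) y = inner x (A *v y)" by (simp add: dot_lmul_matrix)
qed

lemma eig4:
  fixes A B C :: "real^4^4"
  assumes "transpose A = A" "transpose B = B" "transpose C = C"
    "A ** B = B ** A" "A ** C = C ** A" "B ** C = C ** B"
  shows "\<exists>q :: 4 \<Rightarrow> real^4. (\<forall>i j. inner (q i) (q j) = (if i = j then 1 else 0)) \<and>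
     (\<forall>i. \<exists>a b c. A *v q i = a *\<^sub>R q i \<and> B *v q i = b *\<^sub>R q i \<and> C *v q i = c *\<^sub>R q i)"
proof -
  let ?F = "{(*v) A, (*v) B, (*v) C}"
  have sa: "\<forall>f\<in>?F. selfadj f" using assms(1-3) selfadj_sym by auto
  have cm: "\<forall>f\<in>?F. \<forall>g\<in>?F. f \<circ> g = g \<circ> f"
    using assms(4-6) by (auto simp: fun_eq_iff matrix_vector_mul_assoc)
  obtain Bs where Bs: "finite Bs" "UNIV \<subseteq> span Bs" "pairwise orthogonal Bs"
    "\<forall>x\<in>Bs. norm x = 1 \<and> (\<forall>f\<in>?F. \<exists>\<mu>. f x = \<mu> *\<^sub>R x)"
    using eigbasis[of ?F UNIV] sa cm by auto
  have "0 \<notin> Bs" using Bs(4) by force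
  then have ind: "independent Bs" using Bs(3) pairwise_orthogonal_independent by blast
  have "span Bs = UNIV" using Bs(2) by auto
  then have "card Bs = 4" using dim_span_eq_card_independent[OF ind] by simp
  then have "card (UNIV::4 set) = card Bs" by simp
  then obtain h where h: "bij_betw h (UNIV::4 set) Bs"
    using finite_same_card_bij[of "UNIV::4 set" Bs] Bs(1) by auto
  show ?thesis
  proof (intro exI[of _ h] conjI allI)
    fix i j :: 4
    have hi: "h i \<in> Bs" "h j \<in> Bs" using h by (auto simp: bij_betw_def)
    show "inner (h i) (h j) = (if i = j then 1 else 0)"
    proof (cases "i = j")
      case True
      then show ?thesis using Bs(4) hi power2_norm_eq_inner[of "h j"] by auto
    next
      case False
      then have "h i \<noteq> h j" using h by (auto simp: bij_betw_def inj_on_def)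
      then show ?thesis using False Bs(3) hi by (auto simp: pairwise_def orthogonal_def)
    qed
  next
    fix i :: 4
    have hi: "h i \<in> Bs" using h by (auto simp: bij_betw_def)
    then show "\<exists>a b c. A *v h i = a *\<^sub>R h i \<and> B *v h i = b *\<^sub>R h i \<and> C *v h i = c *\<^sub>R h i"
      using Bs(4) by blast
  qed
qed

definition up :: "3 \<Rightarrow> 4" where "up k = (if k = 0 then 1 else if k = 1 then 2 else 3)"
lemma up_simps [simp]: "up 0 = 1" "up 1 = 2" "up 2 = 3" by (simp_all add: up_def)
lemma up_inj_all: "\<forall>k l::3. up k = up l \<longleftrightarrow> k = l"
  by (simp add: forall3')
lemma up_inj: "up k = up l \<longleftrightarrow> k = l"
  using up_inj_all by blast
lemma up_ne0: "up k \<noteq> 0"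
  using forall3' [of "\<lambda>k. up k \<noteq> 0"] by simp
lemma up_dn: "k \<noteq> 0 \<Longrightarrow> up (dn k) = k"
  using forall4' [of "\<lambda>k. k \<noteq> 0 \<longrightarrow> up (dn k) = k"] by (simp add: dn_def)

definition ev :: "4 \<Rightarrow> real^4" where "ev i = (\<chi> k. if k = i then 1 else 0)"

lemma transpose_ev: "transpose P *v ev i = P $ i"
  using forall4'[of "\<lambda>i. transpose P *v ev i = P $ i"]
  by (simp add: vec_eq_iff transpose_def matrix_vector_mult_def ev_def sum4')

lemma Pm_mv: "(Pm Q *v x) $ k = (if k = 0 then x $ 0 else Q$(dn k)$0 * x$1 + Q$(dn k)$1 * x$2 + Q$(dn k)$2 * x$3)"
  using forall4'[of "\<lambda>k. (Pm Q *v x) $ k = (if k = 0 then x $ 0 else Q$(dn k)$0 * x$1 + Q$(dn k)$1 * x$2 + Q$(dn k)$2 * x$3)"]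
  by (simp add: Pm_def matrix_vector_mult_def sum4' dn_def)

definition Pa_of :: "(4 \<Rightarrow> real^4) \<Rightarrow> real^4^4" where
  "Pa_of q = P1 (q 0 $ 0) (q 0 $ 1) (q 0 $ 2) (q 0 $ 3)"
definition Q0 :: "(4 \<Rightarrow> real^4) \<Rightarrow> real^3^3" where
  "Q0 q = (\<chi> k l. (Pa_of q *v q (up k)) $ (up l))"

lemma inner4: "inner (x::real^4) y = x$0*y$0 + x$1*y$1 + x$2*y$2 + x$3*y$3"
  by (simp add: inner_vec_def sum4')

lemma construct:
  assumes on: "\<And>i j. inner (q i) (q j) = (if i = j then 1 else 0)" and dt: "det (Q0 q) = 1"
  shows "\<exists>R P. transpose R ** R = mat 1 \<and> R ** transpose R = mat 1 \<and> transpose P ** P = mat 1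
     \<and> P ** transpose P = mat 1 \<and> (\<forall>u v w. phi0 (fmap R P u) (fmap R P v) (fmap R P w) = phi0 u v w)
     \<and> (\<forall>i. P $ i = q i)"
proof -
  let ?a = "q 0 $ 0" and ?b = "q 0 $ 1" and ?c = "q 0 $ 2" and ?d = "q 0 $ 3"
  define Pa where "Pa = Pa_of q"
  define Q where "Q = Q0 q"
  define r where "r i = Pa *v q i" for i
  have unit: "?a^2 + ?b^2 + ?c^2 + ?d^2 = 1" using on[of 0 0] by (simp add: inner4 power2_eq_square)
  have PaO: "transpose Pa ** Pa = mat 1" unfolding Pa_def Pa_of_def P1_orth_gen unit by simp
  have r0: "r i $ 0 = inner (q 0) (q i)" for i
    unfolding r_def Pa_def Pa_of_def P1_mv by (simp add: inner4)
  have rr: "inner (r i) (r j) = inner (q i) (q j)" for i j unfolding r_def by (rule inner_Q[OF PaO])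
  have Qe: "Q $ k $ l = r (up k) $ (up l)" for k l by (simp add: Q_def Q0_def r_def Pa_def)
  have QQt: "Q ** transpose Q = mat 1"
  proof -
    have "(Q ** transpose Q) $ k $ l = inner (r (up k)) (r (up l)) - r (up k) $ 0 * r (up l) $ 0" for k l
      by (simp add: matrix_matrix_mult_def transpose_def sum3' Qe inner4)
    also have "\<dots> k l = (if k = l then 1 else 0)" for k l
      unfolding rr r0 on using up_ne0[of k] by (simp add: up_inj)
    finally show ?thesis by (simp add: vec_eq_iff mat_def)
  qed
  then have QtQ: "transpose Q ** Q = mat 1" by (simp add: matrix_left_right_inverse)
  have Pmr: "Pm Q *v r i = ev i" for i
  proof -
    have "(Pm Q *v r i) $ k = inner (q k) (q i)" for k
    proof (cases "k = 0")
      case True then show ?thesis by (simp add: Pm_mv r0)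
    next
      case False
      have "(Pm Q *v r i) $ k = inner (r k) (r i) - r k $ 0 * r i $ 0"
        using False by (simp add: Pm_mv Qe up_dn inner4)
      also have "\<dots> = inner (q k) (q i)" unfolding rr r0 on using False by simp
      finally show ?thesis .
    qed
    then show ?thesis by (simp add: vec_eq_iff ev_def on)
  qed
  define P where "P = Pm Q ** Pa"
  have PtP: "transpose P ** P = mat 1"
  proof -
    have "transpose P ** P = transpose Pa ** (transpose (Pm Q) ** Pm Q) ** Pa"
      by (simp add: P_def matrix_transpose_mul matrix_mul_assoc)
    also have "\<dots> = mat 1" by (simp add: Pm_transpose Pm_mult QtQ Pm_one PaO)
    finally show ?thesis .
  qed
  then have PPt: "P ** transpose P = mat 1" by (simp add: matrix_left_right_inverse)
  have Pq: "P *v q i = ev i" for i using Pmr[of i] by (simp add: P_def r_def matrix_vector_mul_assoc)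
  have rows: "P $ i = q i" for i
  proof -
    have "P $ i = transpose P *v ev i" by (rule transpose_ev[symmetric])
    also have "\<dots> = transpose P *v (P *v q i)" by (simp only: Pq)
    also have "\<dots> = q i" by (simp only: matrix_vector_mul_assoc PtP matrix_vector_mul_lid)
    finally show ?thesis .
  qed
  have RtR: "transpose (Rm Q) ** Rm Q = mat 1" by (simp add: Rm_transpose Rm_mult QtQ Rm_one)
  have RRt: "Rm Q ** transpose (Rm Q) = mat 1" by (simp add: Rm_transpose Rm_mult QQt Rm_one)
  have inv: "phi0 (fmap (Rm Q) P u) (fmap (Rm Q) P v) (fmap (Rm Q) P w) = phi0 u v w" for u v w
  proof -
    have e: "fmap (Rm Q) P x = fmap (Rm Q) (Pm Q) (fmap (mat 1) Pa x)" for x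
      using fmap_compose[of "Rm Q" "mat 1" "Pm Q" Pa x] by (simp add: P_def)
    have dQ: "det Q = 1" using dt by (simp add: Q_def)
    show ?thesis unfolding e phi0_H3[OF QtQ dQ] unfolding Pa_def Pa_of_def by (rule phi0_P1[OF unit])
  qed
  show ?thesis using RtR RRt PtP PPt inv rows by blast
qed

lemma Q0_orth:
  assumes on: "\<And>i j. inner (q i) (q j) = (if i = j then 1 else 0)"
  shows "Q0 q ** transpose (Q0 q) = mat 1"
proof -
  let ?a = "q 0 $ 0" and ?b = "q 0 $ 1" and ?c = "q 0 $ 2" and ?d = "q 0 $ 3"
  define Pa where "Pa = Pa_of q"
  define Q where "Q = Q0 q"
  define r where "r i = Pa *v q i" for i
  have unit: "?a^2 + ?b^2 + ?c^2 + ?d^2 = 1" using on[of 0 0] by (simp add: inner4 power2_eq_square)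
  have PaO: "transpose Pa ** Pa = mat 1" unfolding Pa_def Pa_of_def P1_orth_gen unit by simp
  have r0: "r i $ 0 = inner (q 0) (q i)" for i
    unfolding r_def Pa_def Pa_of_def P1_mv by (simp add: inner4)
  have rr: "inner (r i) (r j) = inner (q i) (q j)" for i j unfolding r_def by (rule inner_Q[OF PaO])
  have Qe: "Q $ k $ l = r (up k) $ (up l)" for k l by (simp add: Q_def Q0_def r_def Pa_def)
  have "(Q ** transpose Q) $ k $ l = inner (r (up k)) (r (up l)) - r (up k) $ 0 * r (up l) $ 0" for k l
    by (simp add: matrix_matrix_mult_def transpose_def sum3' Qe inner4)
  also have "\<dots> k l = (if k = l then 1 else 0)" for k l
    unfolding rr r0 on using up_ne0[of k] by (simp add: up_inj)
  finally show ?thesis by (simp add: vec_eq_iff mat_def Q_def)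
qed

lemma det_pm1:
  assumes "Q ** transpose Q = mat (1::real)"
  shows "det Q = 1 \<or> det Q = -1"
proof -
  have "det Q * det Q = 1" using arg_cong[OF assms, of det] by (simp add: det_mul det_transpose)
  then have "(det Q - 1) * (det Q + 1) = 0" by (simp add: algebra_simps)
  then have "det Q - 1 = 0 \<or> det Q + 1 = 0" by simp
  then show ?thesis by (simp add: algebra_simps eq_neg_iff_add_eq_0)
qed

lemma Q0_flip: "det (Q0 (q(3 := - q 3))) = - det (Q0 q)"
proof -
  have e: "Q0 (q(3 := - q 3)) = (\<chi> k l. if k = 2 then - (Q0 q $ k $ l) else Q0 q $ k $ l)"
    by (simp add: vec_eq_iff forall3' Q0_def Pa_of_def matrix_vector_mult_def sum4')
  show ?thesis unfolding e by (simp add: det_3 three_eq_zero algebra_simps)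
qed

definition e3v :: "3 \<Rightarrow> real^3" where "e3v k = (\<chi> j. if j = k then 1 else 0)"

lemma mv_neg: "(M::real^4^4) *v (- x) = - (M *v x)"
  by (simp add: vec_eq_iff matrix_vector_mult_def sum_negf)

lemma mscale_mv: "(c *\<^sub>R (M::real^4^4)) *v x = c *\<^sub>R (M *v x)"
  by (simp add: vec_eq_iff matrix_vector_mult_def sum_distrib_left mult_ac)

lemma trace_scale: "trace (c *\<^sub>R (M::real^4^4)) = c * trace M"
  by (simp add: trace_def sum_distrib_left)

lemma conj_entry: "(P ** X ** transpose P) $ i $ j = inner (P $ i) (X *v (P $ j :: real^4))"
  by (simp add: matrix_matrix_mult_def matrix_vector_mult_def transpose_def sum4' inner4 algebra_simps)

lemma Mof_lin: "t$0 *\<^sub>R Mof A B C (transpose R *v e3v 0) + t$1 *\<^sub>R Mof A B C (transpose R *v e3v 1)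
   + t$2 *\<^sub>R Mof A B C (transpose R *v e3v 2) = Mof A B C (transpose R *v t)"
  by (simp add: Mof_def matrix_vector_mult_def transpose_def sum3' e3v_def scaleR_add_right
      scaleR_add_left algebra_simps)

lemma final_step:
  fixes A B C :: "real^4^4"
  assumes R: "transpose R ** R = mat 1" and P: "transpose P ** P = mat 1" "P ** transpose P = mat 1"
   and inv: "\<And>u v w. phi0 (fmap R P u) (fmap R P v) (fmap R P w) = phi0 u v w"
   and RRt: "R ** transpose R = mat 1"
   and rows: "\<And>i. \<exists>a b c. A *v (P$i) = a *\<^sub>R P$i \<and> B *v (P$i) = b *\<^sub>R P$i \<and> C *v (P$i) = c *\<^sub>R P$i"
   and sl: "sl4 A" "sl4 B" "sl4 C"
  shows "\<exists>A1 B1 C1 :: real^4^4.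
           sl4 A1 \<and> sl4 B1 \<and> sl4 C1 \<and>
           diagonal_mat A1 \<and> diagonal_mat B1 \<and> diagonal_mat C1 \<and>
           G2_equivalent A B C A1 B1 C1"
proof -
  define cj where "cj X = P ** X ** transpose P" for X
  define A1 where "A1 = cj (Mof A B C (transpose R *v e3v 0))"
  define B1 where "B1 = cj (Mof A B C (transpose R *v e3v 1))"
  define C1 where "C1 = cj (Mof A B C (transpose R *v e3v 2))"
  have cj_lin: "cj (X + Y) = cj X + cj Y" "cj (c *\<^sub>R X) = c *\<^sub>R cj X" for X Y c
    by (simp_all add: cj_def matrix_add_ldistrib matrix_add_rdistrib' mmult_scaleR_right mmult_scaleR_left)
  have M: "Mof A1 B1 C1 (R *v s) = P ** Mof A B C s ** transpose P" for s
  proof -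
    have "Mof A1 B1 C1 t = cj (Mof A B C (transpose R *v t))" for t
    proof -
      have "Mof A1 B1 C1 t = cj (t$0 *\<^sub>R Mof A B C (transpose R *v e3v 0) + t$1 *\<^sub>R Mof A B C (transpose R *v e3v 1)
         + t$2 *\<^sub>R Mof A B C (transpose R *v e3v 2))"
        by (simp only: cj_lin Mof_def A1_def B1_def C1_def)
      then show ?thesis by (simp only: Mof_lin)
    qed
    then have "Mof A1 B1 C1 (R *v s) = cj (Mof A B C (transpose R *v (R *v s)))" by blast
    also have "transpose R *v (R *v s) = s" by (simp only: matrix_vector_mul_assoc R matrix_vector_mul_lid)
    finally show ?thesis by (simp add: cj_def)
  qed
  have tr: "trace (cj (Mof A B C y)) = 0" for y
  proof -
    have "trace (cj (Mof A B C y)) = trace (transpose P ** (P ** Mof A B C y))"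
      unfolding cj_def by (rule trace_mul_sym)
    also have "\<dots> = trace (Mof A B C y)" by (simp add: matrix_mul_assoc P(1))
    also have "\<dots> = 0" using sl by (simp add: Mof_def trace_add trace_scale sl4_def)
    finally show ?thesis .
  qed
  have dg: "diagonal_mat (cj (Mof A B C y))" for y
    unfolding diagonal_mat_def
  proof (intro allI impI)
    fix i j :: 4 assume ij: "i \<noteq> j"
    obtain a b c where abc: "A *v (P$j) = a *\<^sub>R P$j" "B *v (P$j) = b *\<^sub>R P$j" "C *v (P$j) = c *\<^sub>R P$j"
      using rows by blast
    have "Mof A B C y *v P$j = (y$0 * a + y$1 * b + y$2 * c) *\<^sub>R P$j"
      by (simp add: Mof_def matrix_vector_mult_add_rdistrib mscale_mv abc scaleR_add_left)
    moreover have "inner (P$i) (P$j) = 0"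
    proof -
      have "(P ** transpose P) $ i $ j = 0" using P(2) ij by (simp add: mat_def)
      then show ?thesis by (simp add: matrix_matrix_mult_def transpose_def inner_vec_def)
    qed
    ultimately show "cj (Mof A B C y) $ i $ j = 0" unfolding cj_def conj_entry by simp
  qed
  have "G2_equivalent A B C A1 B1 C1"
    by (rule equiv_main[OF R RRt P M inv])
  then show ?thesis using tr dg unfolding sl4_def A1_def B1_def C1_def by blast
qed

theorem lemma4p5:
  fixes A B C :: "real^4^4"
  assumes "sl4 A" and "sl4 B" and "sl4 C"
    and "symmetric_mat A" and "symmetric_mat B" and "symmetric_mat C"
    and "commute A B" and "commute A C" and "commute B C"
  shows "\<exists>A1 B1 C1 :: real^4^4.
           sl4 A1 \<and> sl4 B1 \<and> sl4 C1 \<and>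
           diagonal_mat A1 \<and> diagonal_mat B1 \<and> diagonal_mat C1 \<and>
           G2_equivalent A B C A1 B1 C1"
proof -
  obtain q :: "4 \<Rightarrow> real^4" where on: "\<And>i j. inner (q i) (q j) = (if i = j then 1 else 0)"
    and eg: "\<And>i. \<exists>a b c. A *v q i = a *\<^sub>R q i \<and> B *v q i = b *\<^sub>R q i \<and> C *v q i = c *\<^sub>R q i"
    using eig4[of A B C] assms(4-9) unfolding symmetric_mat_def commute_def by blast
  obtain q' :: "4 \<Rightarrow> real^4" where on': "\<And>i j. inner (q' i) (q' j) = (if i = j then 1 else 0)"
    and eg': "\<And>i. \<exists>a b c. A *v q' i = a *\<^sub>R q' i \<and> B *v q' i = b *\<^sub>R q' i \<and> C *v q' i = c *\<^sub>R q' i"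
    and dt: "det (Q0 q') = 1"
  proof (cases "det (Q0 q) = 1")
    case True then show ?thesis using that on eg by blast
  next
    case False
    then have d: "det (Q0 q) = -1" using det_pm1[OF Q0_orth[OF on]] by blast
    let ?q = "q(3 := - q 3)"
    have "inner (?q i) (?q j) = (if i = j then 1 else 0)" for i j
      using on[of i j] on[of 3 j] on[of i 3] on[of 3 3] by (auto simp: inner_minus_left inner_minus_right)
    moreover have "\<exists>a b c. A *v ?q i = a *\<^sub>R ?q i \<and> B *v ?q i = b *\<^sub>R ?q i \<and> C *v ?q i = c *\<^sub>R ?q i" for i
      using eg[of i] by (auto simp: mv_neg)
    moreover have "det (Q0 ?q) = 1" using d Q0_flip[of q] by simp
    ultimately show ?thesis using that by blast
  qed
  obtain R P where RP: "transpose R ** R = mat 1" "R ** transpose R = mat 1" "transpose P ** P = mat 1"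
     "P ** transpose P = mat 1" "\<And>u v w. phi0 (fmap R P u) (fmap R P v) (fmap R P w) = phi0 u v w"
     "\<And>i. P $ i = q' i"
    using construct[OF on' dt] by blast
  show ?thesis
    by (rule final_step[OF RP(1,3,4) RP(5) RP(2) _ assms(1-3)]) (unfold RP(6), rule eg')
qed

end
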